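(* Suppose $q_1,q_2,q\in\mathbb{Z}^+$ with $q\to+\infty$ and $\max\{q_1,q_2\}=o(q^2)$. Then $$\left|\{(a,b)\in\mathbb{Z}^2\cap([q_1,q_1+q]\times[q_2,q_2+q]):\gcd(a,b)=1\}\right|=q^2\left(\frac{6}{\pi^2}+o_q(1)\right).$$ Equivalently, if one chooses independently a uniform integer in $[q_1,q_1+q]$ and a uniform integer in $[q_2,q_2+q]$, the probability that they are relatively prime tends to $\frac6{\pi^2}$ as $q\to+\infty$. *)

theory Defs
  imports Complex_Main
begin

end

theory Submission
  imports Defs "HOL-Computational_Algebra.Squarefree" "HOL-Computational_Algebra.Primes" "HOL-Analysis.Gamma_Function"
begin

definition mu :: "nat \<Rightarrow> int" where
  "mu n = (if squarefree n then (-1) ^ card (prime_factors n) else 0)"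

lemma sqf_prod_pf:
  fixes d :: nat assumes "squarefree d"
  shows "\<Prod>(prime_factors d) = d"
proof -
  have d0: "d \<noteq> 0" using assms by (intro notI) simp
  have "d = (\<Prod>p \<in> prime_factors d. p ^ multiplicity p d)"
    using prod_prime_factors[OF d0] by simp
  also have "\<dots> = (\<Prod>p \<in> prime_factors d. p)"
    using assms d0 by (intro prod.cong refl) (simp add: squarefree_factorial_semiring')
  finally show ?thesis by simp
qed

lemma pf_prod_primes:
  fixes S :: "nat set" assumes "finite S" "\<forall>p\<in>S. prime p"
  shows "prime_factors (\<Prod>S) = S"
proof -
  have "prime_factors (\<Prod>S) = \<Union>((prime_factors \<circ> (\<lambda>x. x)) ` S)"
    using assms by (intro prime_factors_prod) auto
  also have "\<dots> = S" using assms by (auto simp: prime_prime_factors)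
  finally show ?thesis .
qed

lemma sqf_prod_primes:
  fixes S :: "nat set" assumes "finite S" "\<forall>p\<in>S. prime p"
  shows "squarefree (\<Prod>S)"
  using assms by (intro squarefree_prod_coprime) (auto intro: squarefree_prime primes_coprime)

lemma alt_sum_pow:
  assumes "finite P" "P \<noteq> {}"
  shows "(\<Sum>S\<in>Pow P. (-1::int) ^ card S) = 0"
proof -
  have "(\<Prod>x\<in>P. (1::int) - 1) = (\<Sum>X\<in>Pow P. (-1) ^ card X * (\<Prod>x\<in>X. 1) * (\<Prod>x\<in>P-X. 1))"
    using assms(1) by (rule prod_diff_conv_sum)
  moreover have "card P > 0" using assms by (simp add: card_gt_0_iff)
  then have "(0::int) ^ card P = 0" by simp
  ultimately show ?thesis by simp
qed

lemma mu_divsum: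
  assumes "n > 0"
  shows "(\<Sum>d | d dvd n. mu d) = (if n = 1 then 1 else 0)"
proof -
  let ?P = "prime_factors n"
  have fin: "finite {d. d dvd n}" using assms by simp
  have "(\<Sum>d | d dvd n. mu d) = (\<Sum>d \<in> {d. d dvd n \<and> squarefree d}. mu d)"
    using fin by (intro sum.mono_neutral_right) (auto simp: mu_def)
  also have "\<dots> = (\<Sum>d \<in> {d. d dvd n \<and> squarefree d}. (-1) ^ card (prime_factors d))"
    by (intro sum.cong) (auto simp: mu_def)
  also have "\<dots> = (\<Sum>S\<in>Pow ?P. (-1) ^ card (prime_factors (\<Prod>S)))"
  proof (rule sum.reindex_bij_betw[symmetric])
    show "bij_betw (\<lambda>S. \<Prod>S) (Pow ?P) {d. d dvd n \<and> squarefree d}"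
    proof (rule bij_betw_byWitness[where f' = prime_factors])
      show "\<forall>S\<in>Pow ?P. prime_factors (\<Prod>S) = S"
        by (auto intro!: pf_prod_primes intro: finite_subset)
      show "\<forall>d\<in>{d. d dvd n \<and> squarefree d}. \<Prod>(prime_factors d) = d"
        by (auto intro: sqf_prod_pf)
      show "(\<lambda>S. \<Prod>S) ` Pow ?P \<subseteq> {d. d dvd n \<and> squarefree d}"
      proof
        fix x assume "x \<in> (\<lambda>S. \<Prod>S) ` Pow ?P"
        then obtain S where S: "S \<subseteq> ?P" "x = \<Prod>S" by auto
        have fS: "finite S" using S finite_subset by blast
        have pS: "\<forall>p\<in>S. prime p" using S by auto
        have "\<Prod>S dvd \<Prod>?P" using S by (intro prod_dvd_prod_subset) auto
        also have "\<Prod>?P dvd n"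
        proof -
          have "(\<Prod>p\<in>?P. p) dvd (\<Prod>p\<in>?P. p ^ multiplicity p n)"
            using assms by (intro prod_dvd_prod) (auto simp: prime_factors_multiplicity)
          then show ?thesis using prod_prime_factors[of n] assms by simp
        qed
        finally have "x dvd n" using S by simp
        moreover have "squarefree x" using S fS pS sqf_prod_primes by simp
        ultimately show "x \<in> {d. d dvd n \<and> squarefree d}" by simp
      qed
      show "prime_factors ` {d. d dvd n \<and> squarefree d} \<subseteq> Pow ?P"
        using assms by (auto simp: in_prime_factors_iff intro: dvd_trans)
    qed
  qed
  also have "\<dots> = (\<Sum>S\<in>Pow ?P. (-1) ^ card S)"
  proof (intro sum.cong refl)
    fix S assume S: "S \<in> Pow ?P"
    then have "finite S" using finite_subset by blast
    moreover have "\<forall>p\<in>S. prime p" using S by auto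
    ultimately show "(-1) ^ card (prime_factors (\<Prod>S)) = ((-1::int) ^ card S)"
      using pf_prod_primes by simp
  qed
  also have "\<dots> = (if n = 1 then 1 else 0)"
  proof (cases "n = 1")
    case True then show ?thesis by simp
  next
    case False
    then have "?P \<noteq> {}" using assms
    proof -
      obtain p :: nat where "prime p" "p dvd n" using prime_factor_nat[OF False] by blast
      then have "p \<in> ?P" using assms by (simp add: in_prime_factors_iff)
      then show ?thesis by blast
    qed
    then have "(\<Sum>S\<in>Pow ?P. (-1::int) ^ card S) = 0" by (intro alt_sum_pow) auto
    then show ?thesis using False by simp
  qed
  finally show ?thesis .
qed

definition Zk :: "nat \<Rightarrow> real" where
  "Zk k = (\<Sum>m\<in>{1..k}. 1 / (real m)^2)"

lemma Zk_lim: "Zk \<longlonglongrightarrow> pi^2/6"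
proof -
  have "(\<lambda>N. \<Sum>n<N. 1 / (real n + 1)^2) \<longlonglongrightarrow> pi^2/6"
    using inverse_squares_sums by (simp add: sums_def add.commute)
  moreover have "(\<Sum>n<N. 1 / (real n + 1)^2) = Zk N" for N
    unfolding Zk_def by (simp add: sum.atLeast1_atMost_eq add.commute)
  ultimately show ?thesis by simp
qed

lemma Zk_tail: assumes "1 \<le> k" "k \<le> N" shows "Zk N - Zk k \<le> 1 / real k - 1 / real N"
  using assms(2)
proof (induction N rule: dec_induct)
  case base then show ?case by simp
next
  case (step n)
  have "Zk (Suc n) = Zk n + 1 / (real (Suc n))^2" unfolding Zk_def by simp
  moreover have "1 / (real (Suc n))^2 \<le> 1 / real n - 1 / real (Suc n)"
  proof -
    have n1: "real n \<ge> 1" using step assms by simp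
    have "1 / real n - 1 / real (Suc n) = 1 / (real n * (real n + 1))"
      using n1 by (simp add: field_simps)
    also have "\<dots> \<ge> 1 / (real (Suc n))^2"
    proof (rule divide_left_mono)
      show "real n * (real n + 1) \<le> (real (Suc n))^2" by (simp add: power2_eq_square algebra_simps)
    qed (use n1 in auto)
    finally show ?thesis .
  qed
  ultimately show ?case using step by simp
qed

lemma Zk_mono: "k \<le> N \<Longrightarrow> Zk k \<le> Zk N"
  unfolding Zk_def by (intro sum_mono2) auto

lemma Zk_tail_lim: "1 \<le> k \<Longrightarrow> pi^2/6 - Zk k \<le> 1 / real k"
proof -
  assume k: "1 \<le> k"
  have "pi^2/6 \<le> Zk k + 1 / real k"
  proof (rule LIMSEQ_le_const2[OF Zk_lim])
    show "\<exists>N. \<forall>n\<ge>N. Zk n \<le> Zk k + 1 / real k"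
      using Zk_tail[OF k] by (intro exI[of _ k]) (smt (verit) of_nat_0_le_iff divide_nonneg_nonneg)
  qed
  then show ?thesis by simp
qed

lemma Zk_le_lim: "Zk k \<le> pi^2/6"
  by (rule LIMSEQ_le_const[OF Zk_lim]) (auto intro: exI[of _ k] Zk_mono)

lemma Z_ge1: "pi^2/6 \<ge> (1::real)"
proof -
  have "Zk 1 = 1" by (simp add: Zk_def)
  then show ?thesis using Zk_le_lim[of 1] by simp
qed

lemma harm_sqrt: "(\<Sum>d\<in>{1..D}. 1 / real d) \<le> 2 * sqrt (real D)"
proof (induction D)
  case 0 then show ?case by simp
next
  case (Suc n)
  have key: "1 / real (Suc n) \<le> 2 * sqrt (real (Suc n)) - 2 * sqrt (real n)"
  proof -
    define a where "a = sqrt (real (Suc n))"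
    define b where "b = sqrt (real n)"
    have a1: "a \<ge> 1" unfolding a_def by simp
    have b0: "b \<ge> 0" unfolding b_def by simp
    have ab: "b \<le> a" unfolding a_def b_def by simp
    have sq: "a^2 - b^2 = 1" unfolding a_def b_def by simp
    have aa: "a \<le> a^2" using a1 by (simp add: power2_eq_square)
    have "a - b = 1 / (a + b)" using sq a1 b0 by (simp add: field_simps power2_eq_square)
    also have "\<dots> \<ge> 1 / (2 * a)" using a1 b0 ab by (intro divide_left_mono) auto
    finally have "2 * (a - b) \<ge> 1 / a" using a1 by (simp add: field_simps)
    moreover have "1 / a \<ge> 1 / a^2" using a1 aa by (intro divide_left_mono) auto
    moreover have "a^2 = real (Suc n)" unfolding a_def by simp
    ultimately show ?thesis unfolding a_def b_def by simp
  qed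
  have "(\<Sum>d\<in>{1..Suc n}. 1 / real d) = (\<Sum>d\<in>{1..n}. 1 / real d) + 1 / real (Suc n)"
    by simp
  then show ?case using Suc key by simp
qed

lemma dirichlet:
  assumes D: "D \<ge> 1"
  shows "(\<Sum>d\<in>{1..D}. real_of_int (mu d) / (real d)^2 * Zk (D div d)) = 1"
proof -
  define h where "h = (\<lambda>(d::nat, m::nat). (d * m, d))"
  define k where "k = (\<lambda>(n::nat, d::nat). real_of_int (mu d) / (real n)^2)"
  have "(\<Sum>d\<in>{1..D}. real_of_int (mu d) / (real d)^2 * Zk (D div d))
      = (\<Sum>d\<in>{1..D}. \<Sum>m\<in>{1..D div d}. k (h (d, m)))"
    unfolding Zk_def h_def k_def
    by (intro sum.cong refl) (simp add: sum_distrib_left power_mult_distrib)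
  also have "\<dots> = (\<Sum>p\<in>Sigma {1..D} (\<lambda>d. {1..D div d}). k (h p))"
    using sum.Sigma[of "{1..D}" "\<lambda>d. {1..D div d}" "\<lambda>d m. k (h (d,m))"] by (simp add: split_def)
  also have "\<dots> = (\<Sum>p\<in>Sigma {1..D} (\<lambda>n. {d. d dvd n}). k p)"
  proof (rule sum.reindex_bij_betw)
    show "bij_betw h (Sigma {1..D} (\<lambda>d. {1..D div d})) (Sigma {1..D} (\<lambda>n. {d. d dvd n}))"
    proof (rule bij_betw_byWitness[where f' = "\<lambda>(n, d). (d, n div d)"])
      show "\<forall>a\<in>Sigma {1..D} (\<lambda>d. {1..D div d}). (\<lambda>(n, d). (d, n div d)) (h a) = a"
        unfolding h_def by auto
      show "\<forall>a'\<in>Sigma {1..D} (\<lambda>n. {d. d dvd n}). h ((\<lambda>(n, d). (d, n div d)) a') = a'"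
        unfolding h_def by auto
      show "h ` Sigma {1..D} (\<lambda>d. {1..D div d}) \<subseteq> Sigma {1..D} (\<lambda>n. {d. d dvd n})"
      proof
        fix x assume "x \<in> h ` Sigma {1..D} (\<lambda>d. {1..D div d})"
        then obtain d m where dm: "d \<in> {1..D}" "m \<in> {1..D div d}" "x = (d * m, d)"
          unfolding h_def by auto
        have "m * d \<le> D" using dm(1,2) by (simp add: less_eq_div_iff_mult_less_eq)
        moreover have "1 \<le> d * m" using dm by simp
        ultimately show "x \<in> Sigma {1..D} (\<lambda>n. {d. d dvd n})" using dm by (simp add: mult.commute)
      qed
      show "(\<lambda>(n, d). (d, n div d)) ` Sigma {1..D} (\<lambda>n. {d. d dvd n}) \<subseteq> Sigma {1..D} (\<lambda>d. {1..D div d})"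
      proof
        fix x assume "x \<in> (\<lambda>(n, d). (d, n div d)) ` Sigma {1..D} (\<lambda>n. {d. d dvd n})"
        then obtain n d where nd: "n \<in> {1..D}" "d dvd n" "x = (d, n div d)" by auto
        have d0: "d > 0" using nd by (auto intro: Nat.gr0I)
        have dn: "d \<le> n" using nd by (auto intro: dvd_imp_le)
        have "n div d \<ge> 1" using nd d0 dn by (auto simp: div_greater_zero_iff)
        moreover have "n div d \<le> D div d" using nd by (simp add: div_le_mono)
        ultimately show "x \<in> Sigma {1..D} (\<lambda>d. {1..D div d})" using nd d0 dn by auto
      qed
    qed
  qed
  also have "\<dots> = (\<Sum>n\<in>{1..D}. \<Sum>d | d dvd n. k (n, d))"
    using sum.Sigma[of "{1..D}" "\<lambda>n. {d. d dvd n}" "\<lambda>n d. k (n, d)"] by (simp add: split_def)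
  also have "\<dots> = (\<Sum>n\<in>{1..D}. real_of_int (\<Sum>d | d dvd n. mu d) / (real n)^2)"
    unfolding k_def by (simp add: sum_divide_distrib)
  also have "\<dots> = (\<Sum>n\<in>{1..D}. if n = 1 then 1 else 0)"
    by (intro sum.cong refl) (simp add: mu_divsum)
  also have "\<dots> = 1" using D by simp
  finally show ?thesis .
qed

lemma mu_abs: "\<bar>real_of_int (mu d)\<bar> \<le> 1"
  unfolding mu_def by (auto simp: abs_if)

lemma div_bound:
  fixes d D :: nat assumes "1 \<le> d" "d \<le> D"
  shows "1 / real (D div d) \<le> 2 * real d / real D"
proof -
  have q1: "D div d \<ge> 1" using assms div_le_mono[of d D d] by simp
  have "D = d * (D div d) + D mod d" by simp
  moreover have "D mod d < d" using assms by simp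
  moreover have "d \<le> d * (D div d)" using q1 by simp
  ultimately have "D \<le> 2 * d * (D div d)" by linarith
  then have "real D \<le> 2 * real d * real (D div d)"
    by (metis of_nat_le_iff of_nat_mult of_nat_numeral)
  then show ?thesis using q1 assms by (simp add: field_simps)
qed

definition SD :: "nat \<Rightarrow> real" where
  "SD D = (\<Sum>d\<in>{1..D}. real_of_int (mu d) / (real d)^2)"

lemma SD_bound:
  assumes D: "D \<ge> 1"
  shows "\<bar>SD D - 6 / pi^2\<bar> \<le> 4 / sqrt (real D)"
proof -
  define Z where "Z = pi^2/6"
  have Z1: "Z \<ge> 1" unfolding Z_def by (rule Z_ge1)
  have "SD D * Z - 1 = (\<Sum>d\<in>{1..D}. real_of_int (mu d) / (real d)^2 * (Z - Zk (D div d)))"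
    using dirichlet[OF D] unfolding SD_def
    by (simp add: sum_distrib_right right_diff_distrib sum_subtractf)
  also have "\<bar>\<dots>\<bar> \<le> (\<Sum>d\<in>{1..D}. \<bar>real_of_int (mu d) / (real d)^2 * (Z - Zk (D div d))\<bar>)"
    by (rule sum_abs)
  also have "\<dots> \<le> (\<Sum>d\<in>{1..D}. (2 / real D) * (1 / real d))"
  proof (rule sum_mono)
    fix d assume d: "d \<in> {1..D}"
    have q1: "D div d \<ge> 1" using d div_le_mono[of d D d] by simp
    have t0: "0 \<le> Z - Zk (D div d)" using Zk_le_lim unfolding Z_def by simp
    have t1: "Z - Zk (D div d) \<le> 2 * real d / real D"
      using Zk_tail_lim[OF q1] div_bound[of d D] d unfolding Z_def by simp
    have "\<bar>real_of_int (mu d) / (real d)^2 * (Z - Zk (D div d))\<bar>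
        = \<bar>real_of_int (mu d)\<bar> / (real d)^2 * (Z - Zk (D div d))"
      using t0 by (simp add: abs_mult)
    also have "\<dots> \<le> 1 / (real d)^2 * (2 * real d / real D)"
      using t0 t1 mu_abs[of d] by (intro mult_mono divide_right_mono) auto
    also have "\<dots> = (2 / real D) * (1 / real d)"
      using d by (simp add: field_simps power2_eq_square)
    finally show "\<bar>real_of_int (mu d) / (real d)^2 * (Z - Zk (D div d))\<bar> \<le> (2 / real D) * (1 / real d)" .
  qed
  also have "\<dots> = (2 / real D) * (\<Sum>d\<in>{1..D}. 1 / real d)"
    by (simp add: sum_distrib_left)
  also have "\<dots> \<le> (2 / real D) * (2 * sqrt (real D))"
    by (intro mult_left_mono harm_sqrt) auto
  also have "\<dots> = 4 / sqrt (real D)"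
  proof -
    have "sqrt (real D) * sqrt (real D) = real D" by simp
    then show ?thesis using D by (simp add: field_simps)
  qed
  finally have A: "\<bar>SD D * Z - 1\<bar> \<le> 4 / sqrt (real D)" .
  have "SD D - 6 / pi^2 = (SD D * Z - 1) / Z" unfolding Z_def by (simp add: field_simps)
  then have "\<bar>SD D - 6 / pi^2\<bar> = \<bar>SD D * Z - 1\<bar> / Z" using Z1 by simp
  also have "\<dots> \<le> \<bar>SD D * Z - 1\<bar>" using Z1 by (simp add: divide_le_eq mult_le_cancel_left1)
  finally show ?thesis using A by simp
qed

lemma le_div_iff_int: assumes "(d::int) > 0" shows "k \<le> x div d \<longleftrightarrow> d * k \<le> x"
proof
  assume "k \<le> x div d"
  then have "d * k \<le> d * (x div d)" using assms by simp
  moreover have "x = d * (x div d) + x mod d" by simp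
  moreover have "x mod d \<ge> 0" using assms by simp
  ultimately show "d * k \<le> x" by linarith
next
  assume "d * k \<le> x"
  then have "(d * k) div d \<le> x div d" using assms by (intro zdiv_mono1) auto
  then show "k \<le> x div d" using assms by simp
qed

lemma div_bounds_int:
  assumes "(d::int) > 0" shows "d * (x div d) \<le> x \<and> x < d * (x div d) + d"
proof -
  have "x = d * (x div d) + x mod d" by simp
  moreover have "0 \<le> x mod d" "x mod d < d" using assms by simp_all
  ultimately show ?thesis by linarith
qed

definition cnt :: "int \<Rightarrow> nat \<Rightarrow> nat \<Rightarrow> nat" where
  "cnt L q d = card {a \<in> {L..L + int q}. int d dvd a}"

lemma cnt_eq:
  assumes d: "d \<ge> 1"
  shows "int (cnt L q d) = (L + int q) div int d - (L - 1) div int d"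
proof -
  define U where "U = L + int q"
  have dp: "int d > 0" using d by simp
  have set: "{a \<in> {L..U}. int d dvd a} = (\<lambda>k. int d * k) ` {(L-1) div int d + 1 .. U div int d}"
  proof (intro set_eqI iffI)
    fix a assume "a \<in> {a \<in> {L..U}. int d dvd a}"
    then obtain k where a: "a = int d * k" "L \<le> a" "a \<le> U" by (auto elim: dvdE)
    have "k \<le> U div int d" using a dp le_div_iff_int by simp
    moreover have "\<not> k \<le> (L - 1) div int d" using a dp le_div_iff_int by simp
    ultimately show "a \<in> (\<lambda>k. int d * k) ` {(L-1) div int d + 1 .. U div int d}" using a by auto
  next
    fix a assume "a \<in> (\<lambda>k. int d * k) ` {(L-1) div int d + 1 .. U div int d}"
    then obtain k where k0: "k \<in> {(L-1) div int d + 1 .. U div int d}" "a = int d * k" by blast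
    then have k: "a = int d * k" "(L-1) div int d + 1 \<le> k" "k \<le> U div int d" by auto
    have "a \<le> U" using k dp le_div_iff_int by simp
    moreover have "\<not> int d * k \<le> L - 1" using k dp le_div_iff_int[of "int d" k "L - 1"] by simp
    ultimately show "a \<in> {a \<in> {L..U}. int d dvd a}" using k by auto
  qed
  have "cnt L q d = card ((\<lambda>k. int d * k) ` {(L-1) div int d + 1 .. U div int d})"
    unfolding cnt_def U_def[symmetric] set ..
  also have "\<dots> = card {(L-1) div int d + 1 .. U div int d}"
    using dp by (intro card_image inj_onI) auto
  also have "\<dots> = nat (U div int d - (L - 1) div int d)" by simp
  finally have c: "int (cnt L q d) = max 0 (U div int d - (L - 1) div int d)" by simp
  have "U div int d \<ge> (L - 1) div int d" unfolding U_def using dp by (intro zdiv_mono1) auto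
  then show ?thesis using c unfolding U_def by simp
qed

lemma cnt_bound:
  assumes d: "d \<ge> 1"
  shows "\<bar>real (cnt L q d) - real (q + 1) / real d\<bar> \<le> 1"
proof -
  define U where "U = L + int q"
  define \<alpha> where "\<alpha> = U div int d"
  define \<beta> where "\<beta> = (L - 1) div int d"
  have dp: "int d > 0" using d by simp
  have a1: "int d * \<alpha> \<le> U" "U < int d * \<alpha> + int d"
    unfolding \<alpha>_def using div_bounds_int[OF dp] by blast+
  have b1: "int d * \<beta> \<le> L - 1" "L - 1 < int d * \<beta> + int d"
    unfolding \<beta>_def using div_bounds_int[OF dp] by blast+
  have c: "real (cnt L q d) = real_of_int (\<alpha> - \<beta>)"
    using cnt_eq[OF d, of L q] unfolding \<alpha>_def \<beta>_def U_def
    by (metis of_int_of_nat_eq)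
  have e1: "real d * real_of_int (\<alpha> - \<beta>) \<le> real (q + 1) + real d"
  proof -
    have "int d * (\<alpha> - \<beta>) \<le> int q + 1 + int d" using a1 b1 unfolding U_def by (simp add: algebra_simps)
    then have "real_of_int (int d * (\<alpha> - \<beta>)) \<le> real_of_int (int q + 1 + int d)" by (simp only: of_int_le_iff)
    then show ?thesis by simp
  qed
  have e2: "real d * real_of_int (\<alpha> - \<beta>) \<ge> real (q + 1) - real d"
  proof -
    have "int d * (\<alpha> - \<beta>) \<ge> int q + 1 - int d" using a1 b1 unfolding U_def by (simp add: algebra_simps)
    then have "real_of_int (int d * (\<alpha> - \<beta>)) \<ge> real_of_int (int q + 1 - int d)" by (simp only: of_int_le_iff)
    then show ?thesis by simp
  qed
  have rd: "real d > 0" using d by simp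
  have "real_of_int (\<alpha> - \<beta>) \<le> real (q + 1) / real d + 1"
    using e1 rd by (simp add: field_simps)
  moreover have "real_of_int (\<alpha> - \<beta>) \<ge> real (q + 1) / real d - 1"
    using e2 rd by (simp add: field_simps)
  ultimately show ?thesis using c by simp
qed

lemma pointwise:
  fixes a b :: int and M :: nat
  assumes "1 \<le> a" "a \<le> int M"
  shows "(\<Sum>d\<in>{1..M}. if int d dvd a \<and> int d dvd b then mu d else 0) = (if coprime a b then 1 else 0)"
proof -
  define g where "g = nat (gcd a b)"
  have gpos: "gcd a b \<ge> 1" using assms by (metis gcd_eq_0_iff gcd_ge_0_int int_one_le_iff_zero_less
     less_le not_one_le_zero)
  have gle: "gcd a b \<le> a" using assms by (intro zdvd_imp_le) auto
  have gi: "int g = gcd a b" unfolding g_def by (rule nat_0_le) simp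
  have g0: "g > 0" using gi gpos by linarith
  have gM: "g \<le> M" using gle assms gi by linarith
  have dv: "(int d dvd a \<and> int d dvd b) \<longleftrightarrow> d dvd g" for d
    by (metis gcd_greatest_iff gi int_dvd_int_iff)
  have "(\<Sum>d\<in>{1..M}. if int d dvd a \<and> int d dvd b then mu d else 0)
      = (\<Sum>d\<in>{1..M}. if d dvd g then mu d else 0)"
    using dv by simp
  also have "\<dots> = (\<Sum>d\<in>{d\<in>{1..M}. d dvd g}. mu d)"
    by (rule sum.inter_filter[symmetric]) simp
  also have "{d\<in>{1..M}. d dvd g} = {d. d dvd g}"
  proof (intro set_eqI iffI)
    fix d assume "d \<in> {d. d dvd g}"
    then have "d dvd g" by simp
    moreover have "d \<le> g" using calculation g0 by (intro dvd_imp_le) auto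
    moreover have "d \<noteq> 0" using calculation g0 by (intro notI) simp
    ultimately show "d \<in> {d\<in>{1..M}. d dvd g}" using gM by auto
  qed auto
  also have "(\<Sum>d | d dvd g. mu d) = (if g = 1 then 1 else 0)" by (rule mu_divsum[OF g0])
  also have "(g = 1) \<longleftrightarrow> coprime a b"
    using gi by (auto simp: coprime_iff_gcd_eq_1)
  finally show ?thesis .
qed

lemma count_identity:
  fixes A B q :: nat
  assumes A: "A \<ge> 1" and B: "B \<ge> 1"
  defines "M \<equiv> max A B + q"
  shows "int (card {(a :: int, b :: int). a \<in> {int A .. int A + int q} \<and> b \<in> {int B .. int B + int q} \<and> coprime a b})
       = (\<Sum>d\<in>{1..M}. mu d * int (cnt (int A) q d) * int (cnt (int B) q d))"
proof -
  define X where "X = {int A .. int A + int q}"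
  define Y where "Y = {int B .. int B + int q}"
  have fin: "finite (X \<times> Y)" unfolding X_def Y_def by simp
  have "{(a :: int, b :: int). a \<in> X \<and> b \<in> Y \<and> coprime a b} = {p \<in> X \<times> Y. coprime (fst p) (snd p)}"
    by auto
  then have "int (card {(a :: int, b :: int). a \<in> X \<and> b \<in> Y \<and> coprime a b})
       = (\<Sum>p\<in>{p \<in> X \<times> Y. coprime (fst p) (snd p)}. 1)" by simp
  also have "\<dots> = (\<Sum>p\<in>X \<times> Y. if coprime (fst p) (snd p) then 1 else 0)"
    by (rule sum.inter_filter[OF fin])
  also have "\<dots> = (\<Sum>p\<in>X \<times> Y. \<Sum>d\<in>{1..M}. if int d dvd fst p \<and> int d dvd snd p then mu d else 0)"
  proof (intro sum.cong refl)
    fix p assume p: "p \<in> X \<times> Y"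
    then have "1 \<le> fst p" "fst p \<le> int M" using A unfolding X_def M_def by auto
    then show "(if coprime (fst p) (snd p) then 1 else 0) =
        (\<Sum>d\<in>{1..M}. if int d dvd fst p \<and> int d dvd snd p then mu d else 0)"
      using pointwise by simp
  qed
  also have "\<dots> = (\<Sum>d\<in>{1..M}. \<Sum>p\<in>X \<times> Y. if int d dvd fst p \<and> int d dvd snd p then mu d else 0)"
    by (rule sum.swap)
  also have "\<dots> = (\<Sum>d\<in>{1..M}. mu d * int (cnt (int A) q d) * int (cnt (int B) q d))"
  proof (intro sum.cong refl)
    fix d
    have "(\<Sum>p\<in>X \<times> Y. if int d dvd fst p \<and> int d dvd snd p then mu d else 0)
        = (\<Sum>p\<in>{p\<in>X \<times> Y. int d dvd fst p \<and> int d dvd snd p}. mu d)"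
      by (rule sum.inter_filter[OF fin, symmetric])
    also have "\<dots> = mu d * int (card {p\<in>X \<times> Y. int d dvd fst p \<and> int d dvd snd p})" by simp
    also have "{p\<in>X \<times> Y. int d dvd fst p \<and> int d dvd snd p} = {a\<in>X. int d dvd a} \<times> {b\<in>Y. int d dvd b}"
      by auto
    also have "card ({a\<in>X. int d dvd a} \<times> {b\<in>Y. int d dvd b}) = cnt (int A) q d * cnt (int B) q d"
      unfolding cnt_def X_def Y_def by (simp add: card_cartesian_product)
    finally show "(\<Sum>p\<in>X \<times> Y. if int d dvd fst p \<and> int d dvd snd p then mu d else 0)
        = mu d * int (cnt (int A) q d) * int (cnt (int B) q d)" by simp
  qed
  finally show ?thesis unfolding X_def Y_def .
qed

lemma prod_err:
  fixes x y u :: real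
  assumes "\<bar>x - u\<bar> \<le> 1" "\<bar>y - u\<bar> \<le> 1" "u \<ge> 0" "y \<ge> 0"
  shows "\<bar>x * y - u^2\<bar> \<le> 2 * u + 1"
proof -
  have "x * y - u^2 = (x - u) * y + u * (y - u)" by (simp add: algebra_simps power2_eq_square)
  also have "\<bar>\<dots>\<bar> \<le> \<bar>x - u\<bar> * y + u * \<bar>y - u\<bar>"
    using assms by (simp add: abs_mult abs_triangle_ineq order_trans[OF abs_triangle_ineq])
  also have "\<dots> \<le> 1 * y + u * 1"
    using assms by (intro add_mono mult_mono) auto
  also have "\<dots> \<le> 2 * u + 1" using assms by linarith
  finally show ?thesis .
qed

lemma tri_aux: fixes a b c e1 e2 :: real
  shows "\<bar>a - b\<bar> \<le> e1 \<Longrightarrow> \<bar>b - c\<bar> \<le> e2 \<Longrightarrow> \<bar>a - c\<bar> \<le> e1 + e2"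
  by linarith

lemma abs_aux: fixes r s u :: real
  assumes "r \<ge> 0" "s \<ge> 0" shows "\<bar>r * u + s\<bar> \<le> r * \<bar>u\<bar> + s"
  using abs_triangle_ineq[of "r * u" s] assms by (simp add: abs_mult)

lemma aux_div:
  fixes x s m :: real assumes "x > 0"
  shows "(4 * x * s + m) / x^2 = 4 * s / x + m / x^2"
proof -
  have "(4 * x * s + m) / x^2 = (4 * x * s) / x^2 + m / x^2" by (simp add: add_divide_distrib)
  moreover have "(4 * x * s) / x^2 = 4 * s / x" using assms by (simp add: power2_eq_square)
  ultimately show ?thesis by simp
qed

lemma main_est:
  fixes A B q :: nat
  assumes A: "A \<ge> 1" and B: "B \<ge> 1"
  defines "M \<equiv> max A B + q"
  defines "C \<equiv> card {(a :: int, b :: int). a \<in> {int A .. int A + int q} \<and> b \<in> {int B .. int B + int q} \<and> coprime a b}"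
  shows "\<bar>real C / (real q + 1)^2 - 6 / pi^2\<bar> \<le> 4 * sqrt (real M) / (real q + 1) + real M / (real q + 1)^2 + 4 / sqrt (real M)"
proof -
  define u where "u d = (real q + 1) / real d" for d :: nat
  define cA where "cA d = real (cnt (int A) q d)" for d
  define cB where "cB d = real (cnt (int B) q d)" for d
  have M1: "M \<ge> 1" using A unfolding M_def by simp
  have Cs: "real C = (\<Sum>d\<in>{1..M}. real_of_int (mu d) * cA d * cB d)"
  proof -
    have "real_of_int (int C) = real_of_int (\<Sum>d\<in>{1..M}. mu d * int (cnt (int A) q d) * int (cnt (int B) q d))"
      using count_identity[OF A B, of q] unfolding C_def M_def by simp
    then show ?thesis unfolding cA_def cB_def by simp
  qed
  have Ss: "(real q + 1)^2 * SD M = (\<Sum>d\<in>{1..M}. real_of_int (mu d) * (u d)^2)"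
    unfolding SD_def u_def by (simp add: sum_distrib_left power_divide field_simps)
  have "\<bar>real C - (real q + 1)^2 * SD M\<bar> = \<bar>\<Sum>d\<in>{1..M}. real_of_int (mu d) * (cA d * cB d - (u d)^2)\<bar>"
    unfolding Cs Ss by (simp add: sum_subtractf algebra_simps)
  also have "\<dots> \<le> (\<Sum>d\<in>{1..M}. \<bar>real_of_int (mu d) * (cA d * cB d - (u d)^2)\<bar>)"
    by (rule sum_abs)
  also have "\<dots> \<le> (\<Sum>d\<in>{1..M}. 2 * (real q + 1) * (1 / real d) + 1)"
  proof (rule sum_mono)
    fix d assume d: "d \<in> {1..M}"
    then have d1: "d \<ge> 1" by simp
    have e: "\<bar>cA d * cB d - (u d)^2\<bar> \<le> 2 * u d + 1"
      using cnt_bound[OF d1] unfolding cA_def cB_def u_def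
      by (intro prod_err) (auto simp: add.commute)
    have "\<bar>real_of_int (mu d) * (cA d * cB d - (u d)^2)\<bar> = \<bar>real_of_int (mu d)\<bar> * \<bar>cA d * cB d - (u d)^2\<bar>"
      by (simp add: abs_mult)
    also have "\<dots> \<le> 1 * (2 * u d + 1)"
      using mu_abs[of d] e by (intro mult_mono) auto
    also have "\<dots> = 2 * (real q + 1) * (1 / real d) + 1" unfolding u_def by simp
    finally show "\<bar>real_of_int (mu d) * (cA d * cB d - (u d)^2)\<bar> \<le> 2 * (real q + 1) * (1 / real d) + 1" .
  qed
  also have "\<dots> = 2 * (real q + 1) * (\<Sum>d\<in>{1..M}. 1 / real d) + real M"
    by (simp add: sum.distrib sum_distrib_left)
  also have "\<dots> \<le> 2 * (real q + 1) * (2 * sqrt (real M)) + real M"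
    by (intro add_mono mult_left_mono harm_sqrt) auto
  finally have E1: "\<bar>real C - (real q + 1)^2 * SD M\<bar> \<le> 4 * (real q + 1) * sqrt (real M) + real M" by (simp add: algebra_simps)
  have qp: "(real q + 1)^2 > 0" by simp
  have "\<bar>real C / (real q + 1)^2 - SD M\<bar> = \<bar>real C - (real q + 1)^2 * SD M\<bar> / (real q + 1)^2"
  proof -
    have "real C / (real q + 1)^2 - SD M = (real C - (real q + 1)^2 * SD M) / (real q + 1)^2"
      using qp by (simp add: field_simps)
    then show ?thesis by simp
  qed
  also have "\<dots> \<le> (4 * (real q + 1) * sqrt (real M) + real M) / (real q + 1)^2"
    using E1 qp by (intro divide_right_mono) auto
  also have "\<dots> = 4 * sqrt (real M) / (real q + 1) + real M / (real q + 1)^2"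
    by (rule aux_div) simp
  finally have E2: "\<bar>real C / (real q + 1)^2 - SD M\<bar> \<le> 4 * sqrt (real M) / (real q + 1) + real M / (real q + 1)^2" .
  have E3: "\<bar>SD M - 6 / pi^2\<bar> \<le> 4 / sqrt (real M)" by (rule SD_bound[OF M1])
  show ?thesis using tri_aux[OF E2 E3] by (simp only: add.assoc)
qed

lemma final_bound:
  fixes A B q :: nat and \<eta> \<delta> :: real
  assumes A: "A \<ge> 1" and B: "B \<ge> 1" and q: "q \<ge> 1"
    and mx: "real (max A B) \<le> \<delta> * (real q)^2" and de: "\<delta> + 1 / real q \<le> \<eta>" and e1: "\<eta> \<le> 1"
  shows "\<bar>real (card {(a :: int, b :: int). a \<in> {int A .. int A + int q} \<and> b \<in> {int B .. int B + int q} \<and> coprime a b})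
        / (real q)^2 - 6 / pi^2\<bar> \<le> 39 * sqrt \<eta>"
proof -
  define C where "C = card {(a :: int, b :: int). a \<in> {int A .. int A + int q} \<and> b \<in> {int B .. int B + int q} \<and> coprime a b}"
  define M where "M = max A B + q"
  define K where "K = 6 / pi^2"
  define x where "x = real C / (real q + 1)^2"
  have ME: "\<bar>x - K\<bar> \<le> 4 * sqrt (real M) / (real q + 1) + real M / (real q + 1)^2 + 4 / sqrt (real M)"
    using main_est[OF A B, of q] unfolding x_def K_def C_def M_def by simp
  have rq: "real q \<ge> 1" using q by simp
  have "0 \<le> real (max A B)" by simp
  then have dq: "0 \<le> \<delta> * (real q)^2" using mx by linarith
  have d0: "\<delta> \<ge> 0" using dq rq by (simp add: zero_le_mult_iff)
  have iq: "1 / real q \<le> \<eta>" using de d0 by linarith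
  have "1 / real q > 0" using rq by simp
  then have e0: "\<eta> > 0" using iq by linarith
  have sqe: "\<eta> \<le> sqrt \<eta>"
  proof -
    have "sqrt \<eta> \<le> 1" using e1 by simp
    moreover have "\<eta> = sqrt \<eta> * sqrt \<eta>" using e0 by simp
    ultimately show ?thesis using e0 by (metis mult_left_le real_sqrt_ge_zero less_imp_le)
  qed
  have Mle: "real M \<le> \<eta> * (real q + 1)^2"
  proof -
    have "real M \<le> \<delta> * (real q)^2 + real q" using mx unfolding M_def by simp
    also have "\<dots> = (\<delta> + 1 / real q) * (real q)^2" using rq by (simp add: field_simps power2_eq_square)
    also have "\<dots> \<le> \<eta> * (real q)^2" using de by (intro mult_right_mono) auto
    also have "\<dots> \<le> \<eta> * (real q + 1)^2" using e0 by (intro mult_left_mono power_mono) auto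
    finally show ?thesis .
  qed
  have t1: "4 * sqrt (real M) / (real q + 1) \<le> 4 * sqrt \<eta>"
  proof -
    have "sqrt (real M) \<le> sqrt (\<eta> * (real q + 1)^2)" using Mle by (rule real_sqrt_le_mono)
    also have "\<dots> = sqrt \<eta> * (real q + 1)" by (simp add: real_sqrt_mult)
    finally show ?thesis by (simp add: field_simps)
  qed
  have t2: "real M / (real q + 1)^2 \<le> sqrt \<eta>"
  proof -
    have "(real q + 1)^2 > 0" by simp
    then have "real M / (real q + 1)^2 \<le> \<eta>" using Mle by (simp add: pos_divide_le_eq)
    then show ?thesis using sqe by linarith
  qed
  have t3: "4 / sqrt (real M) \<le> 4 * sqrt \<eta>"
  proof -
    have "sqrt (real q) \<le> sqrt (real M)" unfolding M_def by simp
    moreover have "sqrt (real q) > 0" using rq by simp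
    ultimately have "1 / sqrt (real M) \<le> 1 / sqrt (real q)" by (intro divide_left_mono) auto
    also have "\<dots> = sqrt (1 / real q)" by (simp add: real_sqrt_divide)
    also have "\<dots> \<le> sqrt \<eta>" using iq by (rule real_sqrt_le_mono)
    finally show ?thesis by simp
  qed
  have X: "\<bar>x - K\<bar> \<le> 9 * sqrt \<eta>" using ME t1 t2 t3 by linarith
  define r where "r = ((real q + 1) / real q)^2"
  have y: "real C / (real q)^2 = r * x"
  proof -
    have ab: "(real q)^2 \<noteq> 0" "(real q + 1)^2 \<noteq> 0" using rq by auto
    have gen: "c / a = (b / a) * (c / b)" if "a \<noteq> 0" "b \<noteq> 0" for a b c :: real
      using that by (simp add: field_simps)
    show ?thesis unfolding r_def x_def power_divide using gen[OF ab] .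
  qed
  have r4: "r \<le> 4"
  proof -
    have "(real q + 1) / real q \<le> 2" using rq by (simp add: field_simps)
    moreover have "(real q + 1) / real q \<ge> 0" by simp
    ultimately have "((real q + 1) / real q)^2 \<le> 2^2" by (intro power_mono) auto
    then show ?thesis unfolding r_def by simp
  qed
  have r1: "r - 1 = (2 * real q + 1) / (real q)^2" unfolding r_def using rq
    by (simp add: field_simps power2_eq_square)
  have r1b: "r - 1 \<le> 3 / real q"
  proof -
    have "(2 * real q + 1) / (real q)^2 \<le> (3 * real q) / (real q)^2"
      using rq by (intro divide_right_mono) auto
    also have "\<dots> = 3 / real q" using rq by (simp add: power2_eq_square)
    finally show ?thesis using r1 by simp
  qed
  have r0: "r - 1 \<ge> 0" using r1 rq by simp
  have p6: "6 \<le> pi^2" using Z_ge1 by simp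
  have K0: "K \<ge> 0" "K \<le> 1" unfolding K_def using p6 by auto
  have "real C / (real q)^2 - K = r * (x - K) + K * (r - 1)" using y by (simp add: algebra_simps)
  also have "\<bar>\<dots>\<bar> \<le> r * \<bar>x - K\<bar> + K * (r - 1)"
  proof (rule abs_aux)
    show "0 \<le> r" unfolding r_def by simp
    show "0 \<le> K * (r - 1)" using r0 K0 by simp
  qed
  also have "\<dots> \<le> 4 * (9 * sqrt \<eta>) + 1 * (3 * sqrt \<eta>)"
  proof (intro add_mono mult_mono)
    have "3 / real q = 3 * (1 / real q)" by simp
    then show "r - 1 \<le> 3 * sqrt \<eta>" using r1b iq sqe by linarith
  qed (use X r4 K0 r0 e0 in auto)
  finally show ?thesis unfolding C_def K_def by simp
qed

theorem lemma2:
  shows "\<forall>\<epsilon>>0. \<exists>\<delta>>0. \<exists>Q::nat. \<forall>q q1 q2 :: nat.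
     q \<ge> Q \<and> q > 0 \<and> q1 > 0 \<and> q2 > 0 \<and> real (max q1 q2) \<le> \<delta> * (real q)^2 \<longrightarrow>
     \<bar>real (card {(a :: int, b :: int). a \<in> {int q1 .. int q1 + int q} \<and> b \<in> {int q2 .. int q2 + int q} \<and> coprime a b})
        / (real q)^2 - 6 / pi^2\<bar> \<le> \<epsilon>"
proof (intro allI impI)
  fix \<epsilon> :: real assume \<epsilon>: "\<epsilon> > 0"
  define \<eta> where "\<eta> = min 1 ((\<epsilon>/39)^2)"
  have \<eta>0: "\<eta> > 0" "\<eta> \<le> 1" using \<epsilon> by (auto simp: \<eta>_def)
  have se: "39 * sqrt \<eta> \<le> \<epsilon>"
  proof -
    have "\<eta> \<le> (\<epsilon>/39)^2" by (simp add: \<eta>_def)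
    then have "sqrt \<eta> \<le> sqrt ((\<epsilon>/39)^2)" by (rule real_sqrt_le_mono)
    also have "\<dots> = \<epsilon>/39" using \<epsilon> by simp
    finally show ?thesis by simp
  qed
  define Q where "Q = nat \<lceil>2 / \<eta>\<rceil>"
  show "\<exists>\<delta>>0. \<exists>Q::nat. \<forall>q q1 q2 :: nat.
     q \<ge> Q \<and> q > 0 \<and> q1 > 0 \<and> q2 > 0 \<and> real (max q1 q2) \<le> \<delta> * (real q)^2 \<longrightarrow>
     \<bar>real (card {(a :: int, b :: int). a \<in> {int q1 .. int q1 + int q} \<and> b \<in> {int q2 .. int q2 + int q} \<and> coprime a b})
        / (real q)^2 - 6 / pi^2\<bar> \<le> \<epsilon>"
  proof (intro exI[of _ "\<eta>/2"] conjI exI[of _ Q] allI impI)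
    show "\<eta>/2 > 0" using \<eta>0 by simp
    fix q q1 q2 :: nat
    assume H: "q \<ge> Q \<and> q > 0 \<and> q1 > 0 \<and> q2 > 0 \<and> real (max q1 q2) \<le> \<eta>/2 * (real q)^2"
    have "real q \<ge> real Q" using H by simp
    moreover have "real Q \<ge> 2 / \<eta>" unfolding Q_def by (rule real_nat_ceiling_ge)
    ultimately have qe: "2 / \<eta> \<le> real q" by linarith
    have qp: "real q > 0" using H by simp
    have "1 / real q \<le> \<eta> / 2"
      using qe qp \<eta>0 by (simp add: field_simps)
    then have de: "\<eta>/2 + 1 / real q \<le> \<eta>" by simp
    have "\<bar>real (card {(a :: int, b :: int). a \<in> {int q1 .. int q1 + int q} \<and> b \<in> {int q2 .. int q2 + int q} \<and> coprime a b})
        / (real q)^2 - 6 / pi^2\<bar> \<le> 39 * sqrt \<eta>"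
      using H de \<eta>0 by (intro final_bound[where \<delta> = "\<eta>/2"]) auto
    then show "\<bar>real (card {(a :: int, b :: int). a \<in> {int q1 .. int q1 + int q} \<and> b \<in> {int q2 .. int q2 + int q} \<and> coprime a b})
        / (real q)^2 - 6 / pi^2\<bar> \<le> \<epsilon>" using se by linarith
  qed
qed

end
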